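(* Let $l\ge1$ and let $(X_l,M_l),\dots,(X_1,M_1)$ be transformation monoids. Then the wreath product monoid $M_l\circ\cdots\circ M_1$ embeds (as a monoid) in $\mathrm{Ell}(r_0,T(|X_l|,\dots,|X_1|))$.
   Context: A transformation monoid $(X,M)$ is a nonempty set $X$ with a submonoid $M$ of the monoid of all full transformations of $X$ (maps written on the right). For $X=X_l\times\cdots\times X_1$ and $i\le l$, $\pi_i$ is the projection onto $X_i$. A full transformation $\varphi$ of $X$ is sequential if for every $i$, elements with the same last $i$ components have images with the same last $i$ components. Given $(a_{i-1},\dots,a_1)$, the local map $(\cdot,a_{i-1},\dots,a_1)\varphi\pi_i:X_i\to X_i$ sends $x$ to the $i$-th component of $(\dots,x,a_{i-1},\dots,a_1)\varphi$ (well defined by sequentiality). The wreath product $M_l\circ\cdots\circ M_1$ is the monoid of all sequential $\varphi$ with $\varphi\pi_1$ (as a map on $X_1$) in $M_1$ and every local map $(\cdot,a_{i-1},\dots,a_1)\varphi\pi_i$ in $M_i$. $\mathrm{Ell}(r_0,T)$ is the monoid of depth-preserving, distance-non-increasing self-maps of the vertex set of the rooted tree $(r_0,T)$ (depth = distance to $r_0$). $T(n_l,\dots,n_1)$ is the rooted tree of depth $l$ in which each vertex of depth $i-1$ has exactly $n_i$ sons. *)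

theory Defs
  imports "HOL-Library.FuncSet"
begin

(* Transformations of a set A are represented as extensional functions A \<rightarrow>\<^sub>E A;
   maps are written on the right, so the product "f then g" is  compose A g f. *)

definition transformation_monoid :: "'a set \<Rightarrow> ('a \<Rightarrow> 'a) set \<Rightarrow> bool" where
  "transformation_monoid A M \<longleftrightarrow> A \<noteq> {} \<and> M \<subseteq> (A \<rightarrow>\<^sub>E A) \<and>
     restrict id A \<in> M \<and> (\<forall>f\<in>M. \<forall>g\<in>M. compose A g f \<in> M)"

definition prodX :: "nat \<Rightarrow> (nat \<Rightarrow> 'a set) \<Rightarrow> (nat \<Rightarrow> 'a) set" where
  "prodX l X = (\<Pi>\<^sub>E i\<in>{1..l}. X i)"

definition sequential :: "nat \<Rightarrow> (nat \<Rightarrow> 'a set) \<Rightarrow> ((nat \<Rightarrow> 'a) \<Rightarrow> (nat \<Rightarrow> 'a)) \<Rightarrow> bool" where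
  "sequential l X \<phi> \<longleftrightarrow> (\<forall>i\<in>{1..l}. \<forall>x\<in>prodX l X. \<forall>y\<in>prodX l X.
      (\<forall>j\<in>{1..i}. x j = y j) \<longrightarrow> (\<forall>j\<in>{1..i}. \<phi> x j = \<phi> y j))"

(* wreath product M_l \<circ> ... \<circ> M_1: the local map (.,a_{i-1},...,a_1)\<phi>\<pi>_i is in M_i,
   i.e. some m \<in> M_i agrees with it (for i = 1 this says \<phi>\<pi>_1 \<in> M_1) *)
definition wreath :: "nat \<Rightarrow> (nat \<Rightarrow> 'a set) \<Rightarrow> (nat \<Rightarrow> ('a \<Rightarrow> 'a) set)
                      \<Rightarrow> ((nat \<Rightarrow> 'a) \<Rightarrow> (nat \<Rightarrow> 'a)) set" where
  "wreath l X M = {\<phi> \<in> prodX l X \<rightarrow>\<^sub>E prodX l X. sequential l X \<phi> \<and>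
     (\<forall>i\<in>{1..l}. \<forall>a\<in>prodX l X. \<exists>m\<in>M i. \<forall>z\<in>prodX l X.
         (\<forall>j\<in>{1..<i}. z j = a j) \<longrightarrow> \<phi> z i = m (z i))}"

definition gdist :: "'v set \<Rightarrow> ('v \<Rightarrow> 'v \<Rightarrow> bool) \<Rightarrow> 'v \<Rightarrow> 'v \<Rightarrow> nat" where
  "gdist V adj u v = (LEAST n. \<exists>p. length p = Suc n \<and> hd p = u \<and> last p = v \<and>
      set p \<subseteq> V \<and> (\<forall>k<n. adj (p ! k) (p ! Suc k)))"

definition Ell :: "'v set \<Rightarrow> ('v \<Rightarrow> 'v \<Rightarrow> bool) \<Rightarrow> 'v \<Rightarrow> ('v \<Rightarrow> 'v) set" where
  "Ell V adj r0 = {f \<in> V \<rightarrow>\<^sub>E V.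
      (\<forall>u\<in>V. gdist V adj (f u) r0 = gdist V adj u r0) \<and>
      (\<forall>u\<in>V. \<forall>v\<in>V. gdist V adj (f u) (f v) \<le> gdist V adj u v)}"

(* The rooted tree T(n_l,...,n_1) with n_i = |N i|: a vertex of depth k is a list
   [a_1,...,a_k] with a_j \<in> N j; the root is []; the sons of a vertex of depth i-1
   are its extensions by an element of N i, so it has |N i| = n_i sons. *)
definition tree_verts :: "nat \<Rightarrow> (nat \<Rightarrow> 'b set) \<Rightarrow> 'b list set" where
  "tree_verts l N = {xs. length xs \<le> l \<and> (\<forall>j<length xs. xs ! j \<in> N (Suc j))}"

definition tree_adj :: "'b list \<Rightarrow> 'b list \<Rightarrow> bool" where
  "tree_adj u v \<longleftrightarrow> (v \<noteq> [] \<and> u = butlast v) \<or> (u \<noteq> [] \<and> v = butlast u)"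

definition monoid_embeds :: "'a set \<Rightarrow> ('a \<Rightarrow> 'a) set \<Rightarrow> 'b set \<Rightarrow> ('b \<Rightarrow> 'b) set \<Rightarrow> bool" where
  "monoid_embeds A W B E \<longleftrightarrow> (\<exists>h. h \<in> W \<rightarrow> E \<and> inj_on h W \<and>
      h (restrict id A) = restrict id B \<and>
      (\<forall>\<phi>\<in>W. \<forall>\<psi>\<in>W. h (compose A \<psi> \<phi>) = compose B (h \<psi>) (h \<phi>)))"

end

theory Submission
  imports Defs
begin

section \<open>Generic graph distance lemmas\<close>

definition haspath :: "'v set \<Rightarrow> ('v \<Rightarrow> 'v \<Rightarrow> bool) \<Rightarrow> 'v \<Rightarrow> 'v \<Rightarrow> 'v list \<Rightarrow> bool" where
  "haspath V adj u v p \<longleftrightarrow> p \<noteq> [] \<and> hd p = u \<and> last p = v \<and> set p \<subseteq> V \<and> successively adj p"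

lemma gdist_alt:
  "gdist V adj u v = (LEAST n. \<exists>p. length p = Suc n \<and> haspath V adj u v p)"
  unfolding gdist_def haspath_def
  apply (rule arg_cong[where f=Least])
  apply (rule ext)
  apply (auto simp: successively_conv_nth)
  done

lemma gdist_le:
  assumes "haspath V adj u v p"
  shows "gdist V adj u v \<le> length p - 1"
proof -
  have "\<exists>q. length q = Suc (length p - 1) \<and> haspath V adj u v q"
    using assms by (intro exI[of _ p]) (auto simp: haspath_def)
  then show ?thesis unfolding gdist_alt by (rule Least_le)
qed

lemma gdist_wit:
  assumes "haspath V adj u v p"
  shows "\<exists>q. length q = Suc (gdist V adj u v) \<and> haspath V adj u v q"
proof -
  have "\<exists>n q. length q = Suc n \<and> haspath V adj u v q"
    using assms by (intro exI[of _ "length p - 1"] exI[of _ p]) (auto simp: haspath_def)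
  then show ?thesis unfolding gdist_alt by (rule LeastI_ex)
qed

lemma gdist_hom:
  assumes "\<And>x. x \<in> V \<Longrightarrow> f x \<in> V"
    and "\<And>x y. x \<in> V \<Longrightarrow> y \<in> V \<Longrightarrow> adj x y \<Longrightarrow> adj (f x) (f y)"
    and "haspath V adj u v p"
  shows "gdist V adj (f u) (f v) \<le> gdist V adj u v"
proof -
  obtain q where q: "length q = Suc (gdist V adj u v)" "haspath V adj u v q"
    using gdist_wit[OF assms(3)] by blast
  have "haspath V adj (f u) (f v) (map f q)"
    using q(2) assms(1,2) unfolding haspath_def
    by (auto simp: hd_map last_map successively_map elim!: successively_mono)
  from gdist_le[OF this] q(1) show ?thesis by simp
qed

section \<open>Tree facts\<close>

definition ppath :: "'b list \<Rightarrow> 'b list list" where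
  "ppath u = map (\<lambda>i. take (length u - i) u) [0..<Suc (length u)]"

lemma take_in_tree: "u \<in> tree_verts l N \<Longrightarrow> take k u \<in> tree_verts l N"
  unfolding tree_verts_def by auto

lemma ppath_props:
  assumes "u \<in> tree_verts l N"
  shows "haspath (tree_verts l N) tree_adj u [] (ppath u)" "length (ppath u) = Suc (length u)"
proof -
  have s: "successively tree_adj (ppath u)"
    unfolding successively_conv_nth ppath_def
  proof (intro allI impI)
    fix i assume "Suc i < length (map (\<lambda>i. take (length u - i) u) [0..<Suc (length u)])"
    then have i: "Suc i \<le> length u" by simp
    have "take (length u - Suc i) u = butlast (take (length u - i) u)"
      using i by (simp add: butlast_take)
    moreover have "take (length u - i) u \<noteq> []" using i by (cases u) auto
    ultimately show "tree_adj (map (\<lambda>i. take (length u - i) u) [0..<Suc (length u)] ! i)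
          (map (\<lambda>i. take (length u - i) u) [0..<Suc (length u)] ! Suc i)"
      using i unfolding tree_adj_def by (simp del: upt_Suc add: nth_append)
  qed
  show "haspath (tree_verts l N) tree_adj u [] (ppath u)"
    unfolding haspath_def using s take_in_tree[OF assms]
    by (auto simp: ppath_def hd_map last_map simp del: upt_Suc)
  show "length (ppath u) = Suc (length u)" by (simp add: ppath_def)
qed

lemma tree_path:
  assumes "u \<in> tree_verts l N" "v \<in> tree_verts l N"
  shows "\<exists>p. haspath (tree_verts l N) tree_adj u v p"
proof (cases "u = []")
  case True
  then show ?thesis using ppath_props(1)[OF assms(2)]
    by (intro exI[of _ "rev (ppath v)"]) (auto simp: haspath_def hd_rev last_rev tree_adj_def
        intro: successively_mono)
next
  case False
  let ?p = "butlast (ppath u) @ rev (ppath v)"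
  have pu: "haspath (tree_verts l N) tree_adj u [] (ppath u)" and pv: "haspath (tree_verts l N) tree_adj v [] (ppath v)"
    using ppath_props assms by blast+
  have bl: "butlast (ppath u) = map (\<lambda>i. take (length u - i) u) [0..<length u]"
    by (simp add: ppath_def map_butlast[symmetric])
  have ne: "butlast (ppath u) \<noteq> []" using False bl by simp
  have lastb: "last (butlast (ppath u)) = take 1 u"
  proof -
    have "length u - (length u - Suc 0) = Suc 0" using False by (cases u) auto
    then show ?thesis using False unfolding bl by (simp add: last_map)
  qed
  have hdb: "hd (butlast (ppath u)) = u" using False unfolding bl by (simp add: hd_map)
  have sb: "successively tree_adj (butlast (ppath u))"
    using pu unfolding haspath_def
    by (metis append_butlast_last_id successively_append_iff list.simps(3) butlast.simps(1))
  have "haspath (tree_verts l N) tree_adj u v ?p"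
    unfolding haspath_def
    using ne lastb hdb sb pu pv False \<open>u \<noteq> []\<close>
    by (cases u; auto simp: haspath_def hd_append last_rev hd_rev successively_append_iff tree_adj_def
        intro: successively_mono dest: in_set_butlastD)
  then show ?thesis by blast
qed

lemma path_len:
  "successively tree_adj p \<Longrightarrow> p \<noteq> [] \<Longrightarrow> length (hd p) \<le> length (last p) + (length p - 1)"
proof (induction p)
  case Nil then show ?case by simp
next
  case (Cons x xs)
  show ?case
  proof (cases "xs = []")
    case True then show ?thesis by simp
  next
    case False
    have "tree_adj x (hd xs)" "successively tree_adj xs" using Cons.prems False
      by (auto simp: successively_Cons)
    then have "length x \<le> length (hd xs) + 1" "length (hd xs) \<le> length (last xs) + (length xs - 1)"
      using Cons.IH False unfolding tree_adj_def by auto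
    then show ?thesis using False by (cases xs) auto
  qed
qed

lemma depth:
  assumes "u \<in> tree_verts l N"
  shows "gdist (tree_verts l N) tree_adj u [] = length u"
proof (rule antisym)
  show "gdist (tree_verts l N) tree_adj u [] \<le> length u"
    using gdist_le[OF ppath_props(1)[OF assms]] ppath_props(2)[OF assms] by simp
  obtain q where q: "length q = Suc (gdist (tree_verts l N) tree_adj u [])"
      "haspath (tree_verts l N) tree_adj u [] q"
    using gdist_wit[OF ppath_props(1)[OF assms]] by blast
  show "length u \<le> gdist (tree_verts l N) tree_adj u []"
    using path_len[of q] q unfolding haspath_def by auto
qed

section \<open>The embedding\<close>

definition enc :: "(nat \<Rightarrow> 'a \<Rightarrow> 'b) \<Rightarrow> nat \<Rightarrow> (nat \<Rightarrow> 'a) \<Rightarrow> 'b list" where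
  "enc G k x = map (\<lambda>j. G (Suc j) (x (Suc j))) [0..<k]"

definition dec :: "nat \<Rightarrow> (nat \<Rightarrow> 'a set) \<Rightarrow> (nat \<Rightarrow> 'a \<Rightarrow> 'b) \<Rightarrow> (nat \<Rightarrow> 'a) \<Rightarrow> 'b list \<Rightarrow> (nat \<Rightarrow> 'a)" where
  "dec l X G d v = (\<lambda>i. if i \<in> {1..l} then if i \<le> length v then inv_into (X i) (G i) (v!(i-1)) else d i else undefined)"

lemma enc_length[simp]: "length (enc G k x) = k" by (simp add: enc_def)

lemma enc_Nil[simp]: "enc G k x = [] \<longleftrightarrow> k = 0" by (simp add: enc_def)

lemma enc_nth: "j < k \<Longrightarrow> enc G k x ! j = G (Suc j) (x (Suc j))" by (simp add: enc_def)

lemma enc_cong: "(\<And>j. j \<in> {1..k} \<Longrightarrow> x j = y j) \<Longrightarrow> enc G k x = enc G k y"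
  unfolding enc_def by (auto intro!: map_cong)

lemma enc_butlast: "butlast (enc G k x) = enc G (k - 1) x"
  unfolding enc_def by (cases k) (auto simp: map_butlast[symmetric])

context
  fixes l :: nat and X :: "nat \<Rightarrow> 'a set" and N :: "nat \<Rightarrow> 'b set" and G d
  assumes B: "\<forall>i\<in>{1..l}. bij_betw (G i) (X i) (N i)"
    and D: "\<forall>i\<in>{1..l}. d i \<in> X i"
begin

lemma dec_in: "v \<in> tree_verts l N \<Longrightarrow> dec l X G d v \<in> prodX l X"
  unfolding prodX_def dec_def tree_verts_def
proof (intro PiE_I)
  fix i assume v: "v \<in> {xs. length xs \<le> l \<and> (\<forall>j<length xs. xs ! j \<in> N (Suc j))}"
    and i: "i \<in> {1..l}"
  show "(if i \<in> {1..l} then if i \<le> length v then inv_into (X i) (G i) (v ! (i - 1)) else d i else undefined) \<in> X i"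
  proof (cases "i \<le> length v")
    case True
    have "v ! (i - 1) \<in> N i" using v True i by (auto dest: spec[of _ "i - 1"])
    then have "v ! (i - 1) \<in> G i ` X i" using B i by (auto simp: bij_betw_def)
    then show ?thesis using True i by (simp add: inv_into_into)
  qed (use D i in auto)
qed auto

lemma enc_in: "x \<in> prodX l X \<Longrightarrow> k \<le> l \<Longrightarrow> enc G k x \<in> tree_verts l N"
  unfolding tree_verts_def prodX_def
proof (intro CollectI conjI allI impI)
  fix j assume x: "x \<in> (\<Pi>\<^sub>E i\<in>{1..l}. X i)" and k: "k \<le> l" and j: "j < length (enc G k x)"
  then have "x (Suc j) \<in> X (Suc j)" by auto
  moreover have "Suc j \<in> {1..l}" using j k by auto
  ultimately have "G (Suc j) (x (Suc j)) \<in> N (Suc j)" using B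
    by (metis bij_betwE)
  then show "enc G k x ! j \<in> N (Suc j)" using j by (simp add: enc_nth)
qed simp

lemma dec_enc: "x \<in> prodX l X \<Longrightarrow> k \<le> l \<Longrightarrow> j \<in> {1..k} \<Longrightarrow> dec l X G d (enc G k x) j = x j"
proof -
  assume x: "x \<in> prodX l X" and k: "k \<le> l" and j: "j \<in> {1..k}"
  have xj: "x j \<in> X j" using x j k by (auto simp: prodX_def)
  have "enc G k x ! (j - 1) = G (Suc (j - 1)) (x (Suc (j - 1)))" using j by (intro enc_nth) auto
  then have "enc G k x ! (j - 1) = G j (x j)" using j by simp
  moreover have "inj_on (G j) (X j)" using B j k by (auto simp: bij_betw_def)
  ultimately show ?thesis using j k xj by (simp add: dec_def)
qed

lemma enc_dec: "v \<in> tree_verts l N \<Longrightarrow> enc G (length v) (dec l X G d v) = v"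
proof (rule nth_equalityI)
  fix j assume v: "v \<in> tree_verts l N" and j: "j < length (enc G (length v) (dec l X G d v))"
  then have j': "j < length v" "Suc j \<le> l" by (auto simp: tree_verts_def)
  have "v ! j \<in> N (Suc j)" using v j' by (auto simp: tree_verts_def)
  then have "v ! j \<in> G (Suc j) ` X (Suc j)" using B j' by (auto simp: bij_betw_def)
  then show "enc G (length v) (dec l X G d v) ! j = v ! j"
    using j' by (simp add: enc_nth dec_def f_inv_into_f)
qed simp

lemma dec_prefix: "length u \<le> length v \<Longrightarrow> u = take (length u) v \<Longrightarrow> j \<in> {1..length u} \<Longrightarrow>
    dec l X G d u j = dec l X G d v j"
proof -
  assume a: "length u \<le> length v" "u = take (length u) v" "j \<in> {1..length u}"
  then have "u ! (j - 1) = v ! (j - 1)" by (metis atLeastAtMost_iff diff_less less_le_trans nth_take zero_less_one)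
  then show ?thesis using a unfolding dec_def by auto
qed

end

definition hmap :: "nat \<Rightarrow> (nat \<Rightarrow> 'a set) \<Rightarrow> (nat \<Rightarrow> 'b set) \<Rightarrow> (nat \<Rightarrow> 'a \<Rightarrow> 'b) \<Rightarrow> (nat \<Rightarrow> 'a)
    \<Rightarrow> ((nat \<Rightarrow> 'a) \<Rightarrow> (nat \<Rightarrow> 'a)) \<Rightarrow> 'b list \<Rightarrow> 'b list" where
  "hmap l X N G d \<phi> = (\<lambda>v\<in>tree_verts l N. enc G (length v) (\<phi> (dec l X G d v)))"

lemma wreath_seq:
  assumes "\<phi> \<in> wreath l X M" "x \<in> prodX l X" "y \<in> prodX l X" "k \<le> l"
    "\<And>j. j \<in> {1..k} \<Longrightarrow> x j = y j"
  shows "enc G k (\<phi> x) = enc G k (\<phi> y)"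
proof (cases "k = 0")
  case True then show ?thesis by (simp add: enc_def)
next
  case False
  then have "k \<in> {1..l}" using assms(4) by auto
  then have "\<forall>j\<in>{1..k}. \<phi> x j = \<phi> y j"
    using assms unfolding wreath_def sequential_def by blast
  then show ?thesis by (intro enc_cong) auto
qed

lemma wreath_in: "\<phi> \<in> wreath l X M \<Longrightarrow> x \<in> prodX l X \<Longrightarrow> \<phi> x \<in> prodX l X"
  unfolding wreath_def by auto


theorem corollary3p5:
  fixes l :: nat and X :: "nat \<Rightarrow> 'a set" and M :: "nat \<Rightarrow> ('a \<Rightarrow> 'a) set"
    and N :: "nat \<Rightarrow> 'b set"
  assumes "l \<ge> 1"
    and "\<forall>i\<in>{1..l}. transformation_monoid (X i) (M i)"
    and "\<forall>i\<in>{1..l}. \<exists>g. bij_betw g (X i) (N i)"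
  shows "monoid_embeds (prodX l X) (wreath l X M)
           (tree_verts l N) (Ell (tree_verts l N) tree_adj [])"
proof -
  define G where "G = (\<lambda>i. SOME g. bij_betw g (X i) (N i))"
  define d where "d = (\<lambda>i. SOME x. x \<in> X i)"
  have B: "\<forall>i\<in>{1..l}. bij_betw (G i) (X i) (N i)"
    using assms(3) unfolding G_def by (metis someI_ex)
  have D: "\<forall>i\<in>{1..l}. d i \<in> X i"
    using assms(2) unfolding d_def transformation_monoid_def by (metis ex_in_conv someI_ex)
  let ?V = "tree_verts l N" and ?A = "prodX l X" and ?W = "wreath l X M"
  let ?h = "hmap l X N G d"
  let ?dec = "dec l X G d"
  have vl: "\<And>v. v \<in> ?V \<Longrightarrow> length v \<le> l" by (simp add: tree_verts_def)
  have hin: "?h \<phi> v \<in> ?V" and hlen: "length (?h \<phi> v) = length v"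
    if "\<phi> \<in> ?W" "v \<in> ?V" for \<phi> v
    using that enc_in[OF B D wreath_in[OF that(1) dec_in[OF B D that(2)]] vl[OF that(2)]]
    by (auto simp: hmap_def)
  have hadj: "tree_adj (?h \<phi> u) (?h \<phi> v)"
    if phiW: "\<phi> \<in> ?W" "u \<in> ?V" "v \<in> ?V" "tree_adj u v" for \<phi> u v
  proof -
    have key: "?h \<phi> a = butlast (?h \<phi> b) \<and> ?h \<phi> b \<noteq> []"
      if ab: "a \<in> ?V" "b \<in> ?V" "b \<noteq> []" "a = butlast b" for a b
    proof -
      have la: "length a = length b - 1" using ab by simp
      have pre: "a = take (length a) b" using ab by (simp add: butlast_conv_take)
      have "enc G (length a) (\<phi> (?dec a)) = enc G (length a) (\<phi> (?dec b))"
        using ab vl[OF ab(1)] dec_prefix[OF B D _ pre] la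
        by (intro wreath_seq[OF phiW(1) dec_in[OF B D ab(1)] dec_in[OF B D ab(2)]]) auto
      then show ?thesis using ab la by (simp add: hmap_def enc_butlast)
    qed
    show ?thesis using phiW(4) key phiW(2,3) unfolding tree_adj_def by blast
  qed
  have hEll: "?h \<phi> \<in> Ell ?V tree_adj []" if "\<phi> \<in> ?W" for \<phi>
    unfolding Ell_def
  proof (intro CollectI conjI ballI)
    show "?h \<phi> \<in> ?V \<rightarrow>\<^sub>E ?V" using hin[OF that] by (auto simp: hmap_def)
  next
    fix u assume u: "u \<in> ?V"
    show "gdist ?V tree_adj (?h \<phi> u) [] = gdist ?V tree_adj u []"
      using depth[OF u] depth[OF hin[OF that u]] hlen[OF that u] by simp
  next
    fix u v assume u: "u \<in> ?V" and v: "v \<in> ?V"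
    obtain p where p: "haspath ?V tree_adj u v p" using tree_path[OF u v] by blast
    show "gdist ?V tree_adj (?h \<phi> u) (?h \<phi> v) \<le> gdist ?V tree_adj u v"
      by (rule gdist_hom[OF _ _ p]) (use hin[OF that] hadj[OF that] in auto)
  qed
  have hinj: "inj_on ?h ?W"
  proof (rule inj_onI)
    fix \<phi> \<psi> assume \<phi>: "\<phi> \<in> ?W" and \<psi>: "\<psi> \<in> ?W" and eq: "?h \<phi> = ?h \<psi>"
    show "\<phi> = \<psi>"
    proof (rule ext)
      fix x show "\<phi> x = \<psi> x"
      proof (cases "x \<in> ?A")
        case False
        then show ?thesis using \<phi> \<psi> unfolding wreath_def by (auto simp: PiE_def extensional_def)
      next
        case True
        let ?v = "enc G l x"
        have v: "?v \<in> ?V" using enc_in[OF B D True] by simp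
        have dx: "?dec ?v = x"
        proof (rule PiE_ext)
          show "?dec ?v \<in> (\<Pi>\<^sub>E i\<in>{1..l}. X i)" using dec_in[OF B D v] by (simp add: prodX_def)
          show "x \<in> (\<Pi>\<^sub>E i\<in>{1..l}. X i)" using True by (simp add: prodX_def)
          show "\<And>i. i \<in> {1..l} \<Longrightarrow> ?dec ?v i = x i" using dec_enc[OF B D True] by simp
        qed
        have "?h \<phi> ?v = ?h \<psi> ?v" using eq by simp
        then have e: "enc G l (\<phi> x) = enc G l (\<psi> x)" using v dx by (simp add: hmap_def)
        have px: "\<phi> x \<in> ?A" "\<psi> x \<in> ?A" using wreath_in[OF \<phi> True] wreath_in[OF \<psi> True] by auto
        show ?thesis
        proof (rule PiE_ext)
          show "\<phi> x \<in> (\<Pi>\<^sub>E i\<in>{1..l}. X i)" "\<psi> x \<in> (\<Pi>\<^sub>E i\<in>{1..l}. X i)" using px by (auto simp: prodX_def)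
          fix i assume i: "i \<in> {1..l}"
          have "enc G l (\<phi> x) ! (i - 1) = enc G l (\<psi> x) ! (i - 1)" using e by simp
          then have "G i (\<phi> x i) = G i (\<psi> x i)" using i enc_nth[of "i - 1" l G] by auto
          moreover have "\<phi> x i \<in> X i" "\<psi> x i \<in> X i" using px i by (auto simp: prodX_def)
          moreover have "inj_on (G i) (X i)" using B i by (auto simp: bij_betw_def)
          ultimately show "\<phi> x i = \<psi> x i" by (auto dest: inj_onD)
        qed
      qed
    qed
  qed
  have hid: "?h (restrict id ?A) = restrict id ?V"
  proof (rule ext)
    fix v show "?h (restrict id ?A) v = restrict id ?V v"
      using dec_in[OF B D] enc_dec[OF B D] by (auto simp: hmap_def)
  qed
  have hcomp: "?h (compose ?A \<psi> \<phi>) = compose ?V (?h \<psi>) (?h \<phi>)"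
    if \<phi>: "\<phi> \<in> ?W" and \<psi>: "\<psi> \<in> ?W" for \<phi> \<psi>
  proof (rule ext)
    fix v show "?h (compose ?A \<psi> \<phi>) v = compose ?V (?h \<psi>) (?h \<phi>) v"
    proof (cases "v \<in> ?V")
      case False then show ?thesis by (simp add: hmap_def compose_def)
    next
      case True
      let ?x = "?dec v"
      have x: "?x \<in> ?A" using dec_in[OF B D True] .
      have px: "\<phi> ?x \<in> ?A" using wreath_in[OF \<phi> x] .
      have lv: "length v \<le> l" using vl[OF True] .
      have hv: "?h \<phi> v = enc G (length v) (\<phi> ?x)" using True by (simp add: hmap_def)
      have hvV: "?h \<phi> v \<in> ?V" using hin[OF \<phi> True] .
      have "?h \<psi> (?h \<phi> v) = enc G (length v) (\<psi> (?dec (enc G (length v) (\<phi> ?x))))"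
        using hvV hv by (simp add: hmap_def)
      also have "\<dots> = enc G (length v) (\<psi> (\<phi> ?x))"
        using dec_enc[OF B D px lv] lv
        by (intro wreath_seq[OF \<psi> dec_in[OF B D] px]) (use hvV hv in auto)
      finally have eq: "?h \<psi> (?h \<phi> v) = enc G (length v) (\<psi> (\<phi> ?x))" .
      have "?h (compose ?A \<psi> \<phi>) v = enc G (length v) (\<psi> (\<phi> ?x))"
        using True x by (simp add: hmap_def compose_def)
      then show ?thesis using True eq by (simp add: compose_def)
    qed
  qed
  show ?thesis unfolding monoid_embeds_def
    by (intro exI[of _ ?h] conjI ballI hinj hid hcomp) (use hEll in auto)
qed

end
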